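(* Let $p_0\in\mathbb{N}$, $z\in\tilde{\mathcal{A}}_{conv.}$ and $X:=a^{p_0}+bz\in\tilde{\mathcal{A}}_{conv.}$. If $U\in\widehat{\mathcal{A}}$ is such that $UX\in\tilde{\mathcal{A}}_{conv.}$, then $U\in\tilde{\mathcal{A}}_{conv.}$.
   Context: $\widehat{\mathcal{A}}$ is the algebra of formal power series $\sum_{p,q\ge0}\gamma_{p,q}a^pb^q$ in variables $a,b$ with $ab-ba=b^2$ (the $(a,b)$-adic completion of the polynomial algebra with this relation). $\tilde{\mathcal{A}}_{conv.}\subset\widehat{\mathcal{A}}$ is the subalgebra of series with $|\gamma_{p,q}|\le C_RR^{p+q}q!$ for some $R>1$, $C_R>0$. *)

theory Defs
  imports Complex_Main
begin

text \<open>Elements of the completed algebra: coefficient families gamma p q of the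
normally ordered monomials a^p b^q (relation ab - ba = b^2).\<close>
type_synonym ser = "nat \<Rightarrow> nat \<Rightarrow> complex"

text \<open>Normal ordering: b^q a^r = sum over (i,j) of nord q r i j * a^i b^j.
Recurrence from b^j a = a b^j - j b^(j+1).\<close>
fun nord :: "nat \<Rightarrow> nat \<Rightarrow> nat \<Rightarrow> nat \<Rightarrow> int" where
  "nord q 0 i j = (if i = 0 \<and> j = q then 1 else 0)"
| "nord q (Suc r) i j =
     (if i \<ge> 1 then nord q r (i - 1) j else 0)
     - (if j \<ge> 1 then int (j - 1) * nord q r i (j - 1) else 0)"

definition ser_add :: "ser \<Rightarrow> ser \<Rightarrow> ser" where
  "ser_add x y = (\<lambda>p q. x p q + y p q)"

text \<open>Product: (sum g_pq a^p b^q)(sum d_rs a^r b^s)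
 = sum g_pq d_rs a^p (b^q a^r) b^s; the coefficient of a^m b^n is a finite sum
 since nord q r i j = 0 unless i + j = q + r.\<close>
definition ser_mul :: "ser \<Rightarrow> ser \<Rightarrow> ser" where
  "ser_mul x y = (\<lambda>m n. \<Sum>p\<le>m. \<Sum>s\<le>n. \<Sum>q\<le>(m - p) + (n - s).
       x p q * y ((m - p) + (n - s) - q) s
         * of_int (nord q ((m - p) + (n - s) - q) (m - p) (n - s)))"

definition gen_a_pow :: "nat \<Rightarrow> ser" where
  "gen_a_pow k = (\<lambda>p q. if p = k \<and> q = 0 then 1 else 0)"

definition gen_b :: ser where
  "gen_b = (\<lambda>p q. if p = 0 \<and> q = 1 then 1 else 0)"

definition conv :: "ser \<Rightarrow> bool" where
  "conv x \<longleftrightarrow> (\<exists>R>1. \<exists>C>0. \<forall>p q. norm (x p q) \<le> C * R ^ (p + q) * fact q)"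

end

theory Submission
  imports Defs
begin

definition nf :: "nat \<Rightarrow> nat \<Rightarrow> nat \<Rightarrow> nat \<Rightarrow> int" where
  "nf q r i j = (if i \<le> r \<and> i + j = q + r then (-1)^(r-i) * int (r choose (r-i)) * int (pochhammer q (r-i)) else 0)"

lemma nord_nf: "nord q r i j = nf q r i j"
proof (induction r arbitrary: i j)
  case 0
  then show ?case by (auto simp: nf_def)
next
  case (Suc r)
  have e: "nord q (Suc r) i j = (if i \<ge> 1 then nf q r (i - 1) j else 0)
     - (if j \<ge> 1 then int (j - 1) * nf q r i (j - 1) else 0)"
    using Suc by simp
  show ?case
  proof (cases "i \<le> Suc r \<and> i + j = q + Suc r")
    case False
    then show ?thesis unfolding e by (auto simp: nf_def)
  next
    case True
    show ?thesis
    proof (cases i)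
      case 0
      have "nf q (Suc r) i j = (-1)^(Suc r) * int (pochhammer q (Suc r))"
        using True 0 by (simp add: nf_def)
      also have "\<dots> = - (int (q + r) * ((-1)^r * int (pochhammer q r)))"
        by (simp add: pochhammer_Suc algebra_simps)
      also have "\<dots> = nord q (Suc r) i j"
        unfolding e using True 0 by (simp add: nf_def)
      finally show ?thesis by simp
    next
      case (Suc i')
      define k where "k = r - i'"
      have ik: "i' + k = r" using True Suc k_def by simp
      have jq: "j = q + k" using True Suc ik by simp
      show ?thesis
      proof (cases k)
        case 0
        then show ?thesis unfolding e using True Suc ik jq
          by (auto simp: nf_def)
      next
        case (Suc k')
        have n1: "nf q r (i-1) j = (-1)^k * int (r choose k) * int (pochhammer q k)"
          using \<open>i = Suc i'\<close> ik jq k_def by (simp add: nf_def)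
        have rr: "r - i = k'" using \<open>i = Suc i'\<close> ik Suc by simp
        have n2: "nf q r i (j-1) = (-1)^k' * int (r choose k') * int (pochhammer q k')"
          using \<open>i = Suc i'\<close> ik jq Suc unfolding nf_def rr by simp
        have pk: "pochhammer q k = pochhammer q k' * (q + k')"
          using Suc by (simp add: pochhammer_Suc)
        have ch: "Suc r choose k = (r choose k) + (r choose k')"
          using Suc by simp
        have "nf q (Suc r) i j = (-1)^k * int (Suc r choose k) * int (pochhammer q k)"
          using \<open>i = Suc i'\<close> ik jq k_def by (simp add: nf_def)
        also have "\<dots> = (-1)^k * int (r choose k) * int (pochhammer q k)
            - int (j - 1) * ((-1)^k' * int (r choose k') * int (pochhammer q k'))"
          unfolding ch pk using Suc jq by (simp add: algebra_simps)
        also have "\<dots> = nord q (Suc r) i j"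
          unfolding e n1 n2 using \<open>i = Suc i'\<close> jq Suc by simp
        finally show ?thesis by simp
      qed
    qed
  qed
qed

lemma nord_zero: "\<not> (i \<le> r \<and> i + j = q + r) \<Longrightarrow> nord q r i j = 0"
  unfolding nord_nf nf_def by auto

lemma nord_diag: "nord q r r q = 1"
  by (simp add: nord_nf nf_def)

lemma nord_norm: "norm (of_int (nord q r i j) :: complex) \<le> 2^r * real (pochhammer q (r - i))"
proof -
  have "\<bar>real_of_int (nord q r i j)\<bar> \<le> real (r choose (r-i)) * real (pochhammer q (r - i))"
    by (simp add: nord_nf nf_def abs_mult)
  also have "\<dots> \<le> 2^r * real (pochhammer q (r - i))"
    by (intro mult_right_mono) (use binomial_le_pow2[of r "r-i"] in \<open>auto simp flip: of_nat_power\<close>)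
  finally show ?thesis by simp
qed

lemma fact_poch: "fact q * real (pochhammer q k) \<le> fact (q + k)"
proof (induction k)
  case 0 then show ?case by simp
next
  case (Suc k)
  have "fact q * real (pochhammer q (Suc k)) = fact q * real (pochhammer q k) * real (q + k)"
    by (simp add: pochhammer_Suc)
  also have "\<dots> \<le> fact (q + k) * real (q + k)"
    using Suc by (intro mult_right_mono) auto
  also have "\<dots> \<le> fact (q + k) * real (Suc (q + k))"
    by (intro mult_left_mono) auto
  also have "\<dots> = fact (q + Suc k)" by (simp add: algebra_simps)
  finally show ?case .
qed

lemma fact_add_le: "fact a * fact b \<le> (fact (a + b) :: real)"
proof -
  have "fact a * fact b dvd (fact (a + b) :: nat)" by (rule fact_fact_dvd_fact)
  then have "fact a * fact b \<le> (fact (a + b) :: nat)" by (rule dvd_imp_le) simp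
  then have "real (fact a * fact b) \<le> real (fact (a + b))" by linarith
  then show ?thesis by (simp add: of_nat_fact)
qed

lemma geo1: "(\<Sum>q\<le>j. (1/2::real)^q) \<le> 2"
proof -
  have "(\<Sum>q\<le>j. (1/2::real)^q) = 2 - (1/2)^j"
    by (induction j) auto
  then show ?thesis by simp
qed

lemma geo2: "(\<Sum>q\<le>j. (1/2::real)^(j - q)) \<le> 2"
proof -
  have "(\<Sum>q\<le>j. (1/2::real)^(j - q)) = (\<Sum>q\<le>j. (1/2::real)^q)"
    by (rule sum.reindex_bij_witness[of _ "\<lambda>q. j - q" "\<lambda>q. j - q"]) auto
  then show ?thesis using geo1 by simp
qed

lemma ineqL1:
  fixes R S :: real
  assumes "R > 0" "R \<le> S" "16 * 4^p0 * R \<le> S" "k \<ge> 1" "q + k = n"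
  shows "R^(p+k) * S^q * 4^p0 \<le> R^p * S^n / 16"
proof -
  obtain k' where k: "k = Suc k'" using assms(4) by (cases k) auto
  have S0: "S > 0" using assms by linarith
  have "R^(p+k) * S^q * 4^p0 = (R^p * S^q * R^k') * (4^p0 * R)"
    unfolding k by (simp add: power_add algebra_simps)
  also have "\<dots> \<le> (R^p * S^q * S^k') * (S / 16)"
    using assms S0 by (intro mult_mono mult_left_mono power_mono) auto
  also have "\<dots> = R^p * S^n / 16"
    unfolding assms(5)[symmetric] k by (simp add: power_add algebra_simps)
  finally show ?thesis .
qed

lemma ineqL2:
  fixes R S T Cx :: real
  assumes "T > 0" "R = 4*T" "R \<le> S" "Cx * R^p0 * (2*T) \<le> S / 16" "Cx \<ge> 0"
    "p' + i = p + p0" "q + k + s = n" "s \<ge> 1"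
  shows "Cx * R^p' * S^q * T^(i+k+s) * 2^(i+k) * 2^(i+k+s) \<le> R^p * S^n / 16"
proof -
  obtain s' where s: "s = Suc s'" using assms(8) by (cases s) auto
  have S0: "S > 0" using assms by linarith
  have h4: "(4::real)^x = 2^x * 2^x" for x
    by (simp flip: power_mult_distrib)
  have "Cx * R^p' * S^q * T^(i+k+s) * 2^(i+k) * 2^(i+k+s)
      = Cx * (R^p' * (4*T)^i) * S^q * (4*T)^k * (2*T)^s"
    by (simp add: power_add power_mult_distrib h4 algebra_simps)
  also have "R^p' * (4*T)^i = R^p * R^p0"
    using assms(2,6) by (metis power_add)
  finally have e: "Cx * R^p' * S^q * T^(i+k+s) * 2^(i+k) * 2^(i+k+s)
      = (R^p * S^q * (4*T)^k * (2*T)^s') * (Cx * R^p0 * (2*T))"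
    unfolding s by (simp add: algebra_simps)
  have "(R^p * S^q * (4*T)^k * (2*T)^s') * (Cx * R^p0 * (2*T)) \<le> (R^p * S^q * S^k * S^s') * (S/16)"
    using assms S0 by (intro mult_mono mult_left_mono power_mono) auto
  also have "\<dots> = R^p * S^n / 16"
    unfolding assms(7)[symmetric] s by (simp add: power_add algebra_simps)
  finally have *: "(R^p * S^q * (4*T)^k * (2*T)^s') * (Cx * R^p0 * (2*T)) \<le> R^p * S^n / 16" .
  show ?thesis unfolding e by (rule *)
qed

lemma term_bound:
  fixes U X :: ser and R S T Cx M :: real
  assumes IH: "\<And>q p. q < n \<Longrightarrow> norm (U p q) \<le> M * R^p * S^q * fact q"
  and X0: "\<And>r. X r 0 = (if r = p0 then 1 else 0)"
  and X1: "\<And>r s. s \<ge> 1 \<Longrightarrow> norm (X r s) \<le> Cx * T^(r+s) * fact s"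
  and T0: "T > 0" and RT: "R = 4*T" and RS: "R \<le> S" and S1: "16*4^p0*R \<le> S"
  and S2: "Cx*R^p0*(2*T) \<le> S/16" and Cx0: "Cx \<ge> 0" and M0: "M \<ge> 0"
  and hp: "p' \<le> p + p0" and hs: "s \<le> n" and hq: "q \<le> n - s"
  and nd: "\<not>(p' = p \<and> s = 0 \<and> q = n)"
  shows "norm (U p' q * X ((p+p0-p') + (n-s) - q) s
      * of_int (nord q ((p+p0-p') + (n-s) - q) (p+p0-p') (n-s)))
      * 2^((p+p0-p') + ((n-s)-q) + s) \<le> M * R^p * S^n * fact n / 16"
proof -
  define i where "i = p+p0-p'"
  define j where "j = n - s"
  define k where "k = j - q"
  define r where "r = i + k"
  have rr: "(p+p0-p') + (n-s) - q = r" using hq unfolding i_def j_def k_def r_def by simp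
  have ee: "(p+p0-p') + ((n-s)-q) + s = i + k + s" unfolding i_def j_def k_def by simp
  have R0: "R > 0" using RT T0 by simp
  have S0: "S > 0" using R0 RS by simp
  have rhs0: "0 \<le> M * R^p * S^n * fact n / 16" using M0 R0 S0 by simp
  have qk: "q + k + s = n" using hq hs unfolding k_def j_def by simp
  have nb: "norm (of_int (nord q r i j) :: complex) \<le> 2^r * real (pochhammer q k)"
    using nord_norm[of q r i j] unfolding r_def by simp
  have fp: "fact q * real (pochhammer q k) \<le> fact (q+k)" by (rule fact_poch)
  have pc0: "real (pochhammer q k) \<ge> 0" by simp
  have nn: "0 \<le> M * R^p' * S^q * fact q" using M0 R0 S0 by (intro mult_nonneg_nonneg) auto
  have nUX: "norm (U p' q * X r s * of_int (nord q r i j))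
      = norm (U p' q) * norm (X r s) * norm (of_int (nord q r i j) :: complex)"
    by (simp add: norm_mult)
  show ?thesis
    unfolding rr ee unfolding i_def[symmetric] j_def[symmetric]
  proof (cases "s = 0")
    case True
    show "norm (U p' q * X r s * of_int (nord q r i j)) * 2^(i + k + s) \<le> M * R^p * S^n * fact n / 16"
    proof (cases "r = p0")
      case False
      then show ?thesis using True X0 rhs0 by simp
    next
      case rp: True
      have k1: "k \<ge> 1"
      proof (rule ccontr)
        assume "\<not> k \<ge> 1"
        then have "k = 0" by simp
        then have "i = p0" "q = n" using rp True qk unfolding r_def by auto
        then have "p' = p" using hp unfolding i_def by simp
        then show False using nd True \<open>q = n\<close> by simp
      qed
      have qn: "q < n" using k1 qk by simp
      have pk: "p' = p + k" using rp hp unfolding r_def i_def by simp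
      have "norm (U p' q * X r s * of_int (nord q r i j)) * 2^(i + k + s)
          \<le> (M * R^p' * S^q * fact q) * 1 * (2^r * real (pochhammer q k)) * 2^(i+k+s)"
        unfolding nUX using True rp X0 by (intro mult_right_mono mult_mono IH qn nb) (auto simp: M0 R0 S0 nn)
      also have "\<dots> = M * (R^(p+k) * S^q * 4^p0) * (fact q * real (pochhammer q k))"
        using rp True unfolding r_def pk by (simp add: algebra_simps flip: power_mult_distrib)
      also have "\<dots> \<le> M * (R^p * S^n / 16) * fact n"
        using fp qk True ineqL1[OF R0 RS S1 k1, of q n p] M0 R0 S0
        by (intro mult_mono mult_left_mono) auto
      finally show ?thesis by simp
    qed
  next
    case False
    then have s1: "s \<ge> 1" by simp
    have qn: "q < n" using s1 qk by simp
    have "norm (U p' q * X r s * of_int (nord q r i j)) * 2^(i + k + s)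
        \<le> (M * R^p' * S^q * fact q) * (Cx * T^(r+s) * fact s) * (2^r * real (pochhammer q k)) * 2^(i+k+s)"
      unfolding nUX using Cx0 T0 by (intro mult_right_mono mult_mono IH qn nb X1 s1) (auto simp: M0 R0 S0 nn)
    also have "\<dots> = M * (Cx * R^p' * S^q * T^(i+k+s) * 2^(i+k) * 2^(i+k+s)) * ((fact q * real (pochhammer q k)) * fact s)"
      unfolding r_def by (simp add: algebra_simps)
    also have "\<dots> \<le> M * (R^p * S^n / 16) * fact n"
    proof -
      have "(fact q * real (pochhammer q k)) * fact s \<le> fact (q+k) * fact s"
        by (intro mult_right_mono fp) auto
      also have "\<dots> \<le> fact n" using fact_add_le[of "q+k" s] qk by simp
      finally have f: "(fact q * real (pochhammer q k)) * fact s \<le> fact n" .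
      have "Cx * R^p' * S^q * T^(i+k+s) * 2^(i+k) * 2^(i+k+s) \<le> R^p * S^n / 16"
        by (rule ineqL2[OF T0 RT RS S2 Cx0 _ qk s1]) (use hp in \<open>simp add: i_def\<close>)
      then show ?thesis using f M0 R0 S0 by (intro mult_mono mult_left_mono) auto
    qed
    finally show "norm (U p' q * X r s * of_int (nord q r i j)) * 2^(i + k + s) \<le> M * R^p * S^n * fact n / 16"
      by simp
  qed
qed

lemma main_lemma:
  fixes U X :: ser and T Cx Cv W :: real
  assumes X0: "\<And>r. X r 0 = (if r = p0 then 1 else 0)"
  and X1: "\<And>r s. s \<ge> 1 \<Longrightarrow> norm (X r s) \<le> Cx * T^(r+s) * fact s"
  and T1: "T \<ge> 1" and Cx0: "Cx \<ge> 0" and Cv0: "Cv > 0" and W1: "W \<ge> 1" and WT: "W \<le> T"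
  and V: "\<And>m n. norm (ser_mul U X m n) \<le> Cv * W^(m+n) * fact n"
  shows "conv U"
proof -
  define R where "R = 4*T"
  define S where "S = 32 * 4^p0 * R * (1 + Cx*R^p0)"
  define M where "M = 2*Cv*W^p0"
  have T0: "T > 0" using T1 by simp
  have R4: "R \<ge> 4" using T1 unfolding R_def by simp
  have R0: "R > 0" using R4 by simp
  have p4: "(4::real)^p0 \<ge> 1" by simp
  have CR: "Cx*R^p0 \<ge> 0" using Cx0 R0 by simp
  have S1: "16*4^p0*R \<le> S"
  proof -
    have "16*4^p0*R * 1 \<le> 16*4^p0*R * (2*(1 + Cx*R^p0))"
      using CR R0 by (intro mult_left_mono) auto
    moreover have "16*4^p0*R * (2*(1 + Cx*R^p0)) = S" unfolding S_def by (simp add: algebra_simps)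
    ultimately show ?thesis by (metis mult.right_neutral)
  qed
  have RS: "R \<le> S" using S1 p4 R0
    by (smt (verit, ccfv_SIG) mult_le_cancel_right2)
  have S2: "Cx*R^p0*(2*T) \<le> S/16"
  proof -
    have "Cx*R^p0*(2*T) \<le> (1 + Cx*R^p0) * (2*R)" using CR T0 unfolding R_def
      by (intro mult_mono) auto
    also have "\<dots> \<le> (1 + Cx*R^p0) * (2*R) * 4^p0" 
    proof -
      have "0 \<le> (1 + Cx*R^p0) * (2*R)" using CR R0 by simp
      from mult_left_mono[OF p4 this] show ?thesis by simp
    qed
    also have "\<dots> = S/16" unfolding S_def by simp
    finally show ?thesis .
  qed
  have S0: "S > 0" using R0 RS by simp
  have Sg1: "S > 1" using R4 RS by simp
  have M0: "M > 0" unfolding M_def using Cv0 W1 by simp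
  have claim: "\<forall>p. norm (U p n) \<le> M * R^p * S^n * fact n" for n
  proof (induction n rule: less_induct)
    case (less n)
    have IH: "\<And>q p. q < n \<Longrightarrow> norm (U p q) \<le> M * R^p * S^q * fact q"
      using less by blast
    show ?case
    proof
      fix p
      define m where "m = p + p0"
      define K where "K = M * R^p * S^n * fact n"
      define F where "F p' s q = U p' q * X ((m-p')+(n-s)-q) s
          * of_int (nord q ((m-p')+(n-s)-q) (m-p') (n-s))" for p' s q
      define E where "E p' s q = (if p' = p \<and> s = 0 \<and> q = n then 0 else F p' s q)" for p' s q
      have Vsum: "ser_mul U X m n = (\<Sum>p'\<le>m. \<Sum>s\<le>n. \<Sum>q\<le>(m-p')+(n-s). F p' s q)"
        unfolding ser_mul_def F_def by simp
      have Fd: "F p 0 n = U p n"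
        unfolding F_def m_def using X0 nord_diag[of n p0] by simp
      have FE: "F p' s q = E p' s q + (if p' = p then if s = 0 then if q = n then U p n else 0 else 0 else 0)"
        for p' s q unfolding E_def using Fd by auto
      have split: "(\<Sum>p'\<le>m. \<Sum>s\<le>n. \<Sum>q\<le>(m-p')+(n-s). F p' s q)
          = (\<Sum>p'\<le>m. \<Sum>s\<le>n. \<Sum>q\<le>(m-p')+(n-s). E p' s q) + U p n"
      proof -
        have a: "(\<Sum>q\<le>(m-p')+(n-s). (if p' = p then if s = 0 then if q = n then U p n else 0 else 0 else 0))
           = (if p' = p then if s = 0 then U p n else 0 else 0)" for p' s
          by (cases "p' = p"; cases "s = 0") (auto simp: m_def)
        have b: "(\<Sum>s\<le>n. (if p' = p then if s = 0 then U p n else 0 else 0))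
           = (if p' = p then U p n else 0)" for p'
          by (cases "p' = p") auto
        show ?thesis unfolding FE sum.distrib a b by (simp add: m_def)
      qed
      have tb: "norm (E p' s q) \<le> (if q \<le> n - s then K/16 * (1/2)^(m-p') * (1/2)^((n-s)-q) * (1/2)^s else 0)"
        if "p' \<le> m" "s \<le> n" for p' s q
      proof (cases "q \<le> n - s")
        case False
        then have "nord q ((m-p')+(n-s)-q) (m-p') (n-s) = 0" by (intro nord_zero) auto
        then show ?thesis using False unfolding E_def F_def by simp
      next
        case True
        show ?thesis
        proof (cases "p' = p \<and> s = 0 \<and> q = n")
          case True
          then show ?thesis unfolding E_def K_def using M0 R0 S0 by simp
        next
          case nd: False
          have "norm (F p' s q) * 2^((m-p') + ((n-s)-q) + s) \<le> K/16"
            unfolding F_def K_def m_def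
            by (rule term_bound[OF IH X0 X1 T0 R_def RS S1 S2 Cx0 _ _ that(2) True nd])
               (use M0 that in \<open>auto simp: m_def\<close>)
          then have "norm (F p' s q) \<le> K/16 / 2^((m-p') + ((n-s)-q) + s)"
            by (simp add: pos_le_divide_eq)
          also have "\<dots> = K/16 * (1/2)^(m-p') * (1/2)^((n-s)-q) * (1/2)^s"
            by (simp add: power_add power_one_over)
          finally have "norm (F p' s q) \<le> K/16 * (1/2)^(m-p') * (1/2)^((n-s)-q) * (1/2)^s" .
          moreover have "E p' s q = F p' s q" using nd unfolding E_def by auto
          ultimately show ?thesis using True by simp
        qed
      qed
      have Kp: "K \<ge> 0" unfolding K_def using M0 R0 S0 by simp
      have qsum: "norm (\<Sum>q\<le>(m-p')+(n-s). E p' s q) \<le> K/8 * (1/2)^(m-p') * (1/2)^s"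
        if "p' \<le> m" "s \<le> n" for p' s
      proof -
        have "norm (\<Sum>q\<le>(m-p')+(n-s). E p' s q)
            \<le> (\<Sum>q\<le>(m-p')+(n-s). (if q \<le> n - s then K/16 * (1/2)^(m-p') * (1/2)^((n-s)-q) * (1/2)^s else 0))"
          by (rule sum_norm_le) (use tb that in auto)
        also have "\<dots> = (\<Sum>q\<le>n-s. (if q \<le> n - s then K/16 * (1/2)^(m-p') * (1/2)^((n-s)-q) * (1/2)^s else 0))"
          by (rule sum.mono_neutral_right) auto
        also have "\<dots> = K/16 * (1/2)^(m-p') * (1/2)^s * (\<Sum>q\<le>n-s. (1/2::real)^((n-s)-q))"
          by (simp add: sum_distrib_left algebra_simps)
        also have "\<dots> \<le> K/16 * (1/2)^(m-p') * (1/2)^s * 2"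
          by (intro mult_left_mono geo2) (use Kp in auto)
        finally have X: "norm (\<Sum>q\<le>(m-p')+(n-s). E p' s q) \<le> K/16 * (1/2)^(m-p') * (1/2)^s * 2" .
        have eq: "K/16 * (1/2)^(m-p') * (1/2)^s * 2 = K/8 * (1/2)^(m-p') * (1/2::real)^s" by simp
        show ?thesis using X unfolding eq .
      qed
      have ssum: "norm (\<Sum>s\<le>n. \<Sum>q\<le>(m-p')+(n-s). E p' s q) \<le> K/4 * (1/2)^(m-p')"
        if "p' \<le> m" for p'
      proof -
        have "norm (\<Sum>s\<le>n. \<Sum>q\<le>(m-p')+(n-s). E p' s q) \<le> (\<Sum>s\<le>n. K/8 * (1/2)^(m-p') * (1/2)^s)"
          by (rule sum_norm_le) (use qsum that in auto)
        also have "\<dots> = K/8 * (1/2)^(m-p') * (\<Sum>s\<le>n. (1/2::real)^s)"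
          by (simp add: sum_distrib_left)
        also have "\<dots> \<le> K/8 * (1/2)^(m-p') * 2"
          by (intro mult_left_mono geo1) (use Kp in auto)
        finally show ?thesis by simp
      qed
      have psum: "norm (\<Sum>p'\<le>m. \<Sum>s\<le>n. \<Sum>q\<le>(m-p')+(n-s). E p' s q) \<le> K/2"
      proof -
        have "norm (\<Sum>p'\<le>m. \<Sum>s\<le>n. \<Sum>q\<le>(m-p')+(n-s). E p' s q) \<le> (\<Sum>p'\<le>m. K/4 * (1/2)^(m-p'))"
          by (rule sum_norm_le) (use ssum in auto)
        also have "\<dots> = K/4 * (\<Sum>p'\<le>m. (1/2::real)^(m-p'))"
          by (simp add: sum_distrib_left)
        also have "\<dots> \<le> K/4 * 2"
          by (intro mult_left_mono geo2) (use Kp in auto)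
        finally show ?thesis by simp
      qed
      have Vb: "Cv * W^(m+n) * fact n \<le> K/2"
      proof -
        have "W^(m+n) = W^p0 * (W^p * W^n)" unfolding m_def by (simp add: power_add)
        also have "\<dots> \<le> W^p0 * (R^p * S^n)"
          using W1 WT R_def RS by (intro mult_left_mono mult_mono power_mono) auto
        finally have "Cv * W^(m+n) * fact n \<le> Cv * (W^p0 * (R^p * S^n)) * fact n"
          using Cv0 by (intro mult_right_mono mult_left_mono) auto
        then show ?thesis unfolding K_def M_def by (simp add: algebra_simps)
      qed
      have VE: "ser_mul U X m n = (\<Sum>p'\<le>m. \<Sum>s\<le>n. \<Sum>q\<le>(m-p')+(n-s). E p' s q) + U p n"
        using trans[OF Vsum split] .
      have "U p n = ser_mul U X m n - (\<Sum>p'\<le>m. \<Sum>s\<le>n. \<Sum>q\<le>(m-p')+(n-s). E p' s q)"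
        unfolding VE by simp
      then have "norm (U p n) \<le> norm (ser_mul U X m n) + norm (\<Sum>p'\<le>m. \<Sum>s\<le>n. \<Sum>q\<le>(m-p')+(n-s). E p' s q)"
        by (simp only: norm_triangle_ineq4)
      also have "\<dots> \<le> K/2 + K/2" using V[of m n] Vb psum by linarith
      finally have "norm (U p n) \<le> K" by simp
      then show "norm (U p n) \<le> M * R^p * S^n * fact n" unfolding K_def .
    qed
  qed
  show ?thesis unfolding conv_def
  proof (intro exI conjI allI)
    show "S > 1" by (rule Sg1)
    show "M > 0" by (rule M0)
    fix p q
    have "norm (U p q) \<le> M * R^p * S^q * fact q" using claim by blast
    also have "\<dots> \<le> M * S^p * S^q * fact q"
      using M0 R0 RS S0 by (intro mult_right_mono mult_left_mono power_mono) auto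
    finally show "norm (U p q) \<le> M * S^(p+q) * fact q" by (simp add: power_add algebra_simps)
  qed
qed

lemma Xb0: "ser_mul gen_b z r 0 = 0"
  unfolding ser_mul_def
proof (intro sum.neutral ballI)
  fix p s q assume "p \<in> {..r}" "s \<in> {..0::nat}" "q \<in> {..(r-p)+(0-s)}"
  then have s0: "s = 0" and qr: "q \<le> r - p" by auto
  show "gen_b p q * z ((r-p)+(0-s)-q) s * of_int (nord q ((r-p)+(0-s)-q) (r-p) (0-s)) = 0"
  proof (cases "p = 0 \<and> q = 1")
    case True
    then have "nord q ((r-p)+(0-s)-q) (r-p) (0-s) = 0" using s0 qr by (intro nord_zero) auto
    then show ?thesis by simp
  next
    case False
    then show ?thesis by (auto simp: gen_b_def)
  qed
qed

lemma Xb1: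
  fixes Cz Rz :: real
  assumes zb: "\<And>p q. norm (z p q) \<le> Cz * Rz^(p+q) * fact q" and Rz1: "Rz \<ge> 1" and Cz0: "Cz \<ge> 0"
  and n1: "n \<ge> 1"
  shows "norm (ser_mul gen_b z m n) \<le> 2 * Cz * (2*Rz)^(m+n) * fact n"
proof -
  define c where "c = Cz * (2*Rz)^(m+n) * fact (n-1)"
  have c0: "c \<ge> 0" unfolding c_def using Cz0 Rz1 by simp
  have tb: "norm (gen_b p q * z ((m-p)+(n-s)-q) s * of_int (nord q ((m-p)+(n-s)-q) (m-p) (n-s)))
      \<le> (if p = 0 then if q = 1 then c else 0 else 0)"
    if "p \<le> m" "s \<le> n" "q \<le> (m-p)+(n-s)" for p s q
  proof (cases "p = 0 \<and> q = 1")
    case False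
    then show ?thesis using c0 by (auto simp: gen_b_def)
  next
    case True
    define r where "r = m + (n - s) - 1"
    have e1: "(m-p)+(n-s)-q = r" using True unfolding r_def by simp
    show ?thesis
    proof (cases "n - s \<ge> 1")
      case False
      then have "nord q r (m-p) (n-s) = 0" using True unfolding r_def by (intro nord_zero) auto
      then show ?thesis using True c0 e1 by simp
    next
      case j1: True
      define k where "k = n - s - 1"
      have rk: "r - m = k" unfolding r_def k_def using j1 by simp
      have ks: "k + s = n - 1" unfolding k_def using j1 by simp
      have rs: "r + s \<le> m + n" unfolding r_def using j1 by simp
      have rmn: "r \<le> m + n" unfolding r_def by simp
      have nb: "norm (of_int (nord 1 r m (n-s)) :: complex) \<le> 2^r * fact k"
      proof -
        have pf: "real (pochhammer (1::nat) k) = fact k" by (metis of_nat_fact pochhammer_fact)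
        show ?thesis using nord_norm[of 1 r m "n-s"] unfolding rk pf .
      qed
      have "norm (gen_b p q * z ((m-p)+(n-s)-q) s * of_int (nord q ((m-p)+(n-s)-q) (m-p) (n-s)))
          = norm (z r s) * norm (of_int (nord 1 r m (n-s)) :: complex)"
        using True unfolding e1 by (simp add: gen_b_def norm_mult)
      also have "\<dots> \<le> (Cz * Rz^(r+s) * fact s) * (2^r * fact k)"
        using zb Cz0 Rz1 by (intro mult_mono nb) auto
      also have "\<dots> = Cz * (Rz^(r+s) * 2^r) * (fact k * fact s)" by (simp add: algebra_simps)
      also have "\<dots> \<le> Cz * (Rz^(m+n) * 2^(m+n)) * fact (n-1)"
      proof -
        have "Rz^(r+s) \<le> Rz^(m+n)" using Rz1 rs by (intro power_increasing) auto
        moreover have "(2::real)^r \<le> 2^(m+n)" using rmn by (intro power_increasing) auto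
        moreover have "fact k * fact s \<le> (fact (n-1)::real)" using fact_add_le[of k s] ks by simp
        ultimately show ?thesis using Cz0 Rz1
          by (intro mult_mono mult_left_mono) auto
      qed
      also have "\<dots> = c" unfolding c_def by (simp add: power_mult_distrib)
      finally show ?thesis using True by simp
    qed
  qed
  have "norm (ser_mul gen_b z m n) \<le> (\<Sum>p\<le>m. \<Sum>s\<le>n. \<Sum>q\<le>(m-p)+(n-s). (if p = 0 then if q = 1 then c else 0 else 0))"
    unfolding ser_mul_def
    by (intro sum_norm_le ballI order_trans[OF norm_sum] sum_mono tb) auto
  also have "\<dots> \<le> (\<Sum>p\<le>m. \<Sum>s\<le>n. (if p = 0 then c else 0))"
    by (intro sum_mono) (use c0 in auto)
  also have "\<dots> = real (Suc n) * c" by (simp flip: sum_distrib_left)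
  also have "\<dots> \<le> 2 * Cz * (2*Rz)^(m+n) * fact n"
  proof -
    obtain n' where n: "n = Suc n'" using n1 by (cases n) auto
    have "real (Suc n) \<le> 2 * real n" using n1 by simp
    then have "real (Suc n) * c \<le> 2 * real n * c" using c0 by (intro mult_right_mono) auto
    also have "\<dots> = 2 * Cz * (2*Rz)^(m+n) * fact n" unfolding c_def n by (simp add: algebra_simps)
    finally show ?thesis .
  qed
  finally show ?thesis .
qed

theorem proposition1p4p2:
  fixes p0 :: nat and z U :: ser
  assumes "conv z"
    and "conv (ser_mul U (ser_add (gen_a_pow p0) (ser_mul gen_b z)))"
  shows "conv U"
proof -
  define X where "X = ser_add (gen_a_pow p0) (ser_mul gen_b z)"
  obtain Rz Cz where Rz: "Rz > 1" and Cz: "Cz > 0" and zb: "\<And>p q. norm (z p q) \<le> Cz * Rz^(p+q) * fact q"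
    using assms(1) unfolding conv_def by blast
  obtain Rv Cv where Rv: "Rv > 1" and Cv: "Cv > 0"
    and vb: "\<And>p q. norm (ser_mul U X p q) \<le> Cv * Rv^(p+q) * fact q"
    using assms(2) unfolding conv_def X_def by blast
  define T where "T = max (2*Rz) Rv"
  have X0: "X r 0 = (if r = p0 then 1 else 0)" for r
    unfolding X_def ser_add_def using Xb0[of z r] by (simp add: gen_a_pow_def)
  have X1: "norm (X r s) \<le> (2*Cz) * T^(r+s) * fact s" if "s \<ge> 1" for r s
  proof -
    have "X r s = ser_mul gen_b z r s" unfolding X_def ser_add_def gen_a_pow_def using that by simp
    then have "norm (X r s) \<le> 2 * Cz * (2*Rz)^(r+s) * fact s"
      using Xb1[OF zb _ _ that, of r] Rz Cz by simp
    also have "\<dots> \<le> 2 * Cz * T^(r+s) * fact s"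
      using Rz Cz unfolding T_def by (intro mult_right_mono mult_left_mono power_mono) auto
    finally show ?thesis by simp
  qed
  show ?thesis
    by (rule main_lemma[OF X0 X1 _ _ Cv _ _ vb]) (use Rz Rv Cz in \<open>auto simp: T_def\<close>)
qed

end
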